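(* Let $\alpha>0$ and let $\eta_1,\eta_2\in W^{1,2}_{\mathrm{loc}}(\mathbb R)$ be real $2\pi$-periodic functions, and set $f(z)=|z|^\alpha(\eta_1(\arg z)+i\eta_2(\arg z))$ for $z\ne0$. Let $\mu_0,\nu_0:\mathbb R\to\mathbb R$ be bounded measurable $2\pi$-periodic functions with $\||\mu_0|+|\nu_0|\|_\infty<1$, and set $\mu(z)=-\mu_0(\arg z)\,z\bar z^{-1}$, $\nu(z)=-\nu_0(\arg z)$. If $f$ satisfies $\bar\partial f=\mu\partial f+\nu\overline{\partial f}$ a.e., then $$\dot\eta_1=-\alpha k_2^{-1}\eta_2,\qquad \dot\eta_2=\alpha k_1\eta_1,$$ where $k_1=\frac{1+\mu_0+\nu_0}{1-\mu_0-\nu_0}>0$ and $k_2=\frac{1-\mu_0+\nu_0}{1+\mu_0-\nu_0}>0$. Conversely, if $(\eta_1,\eta_2)$ ($2\pi$-periodic, in $W^{1,2}_{\mathrm{loc}}$) satisfies $\dot\eta_1=-\alpha k_2^{-1}\eta_2$, $\dot\eta_2=\alpha k_1\eta_1$ for some $\alpha>0$ and some $2\pi$-periodic functions $k_1,k_2>0$ bounded from above and from below away from zero, then $f(z)=|z|^\alpha(\eta_1(\arg z)+i\eta_2(\arg z))$ satisfies $\bar\partial f=\mu\partial f+\nu\overline{\partial f}$ with $\mu(z)=-\mu_0(\arg z)z\bar z^{-1}$, $\nu(z)=-\nu_0(\arg z)$, where $$\mu_0=\frac{k_1-k_2}{1+k_1+k_2+k_1k_2},\qquad \nu_0=\fr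ac{k_1k_2-1}{1+k_1+k_2+k_1k_2}.$$
   Context: $\bar\partial=\frac12(\partial_x+i\partial_y)$, $\partial=\frac12(\partial_x-i\partial_y)$; a dot denotes derivative with respect to the angular variable $\theta=\arg z$. *)

theory Defs
  imports "HOL-Analysis.Analysis"
begin

definition periodic2pi :: "(real \<Rightarrow> real) \<Rightarrow> bool" where
  "periodic2pi g \<longleftrightarrow> (\<forall>t. g (t + 2 * pi) = g t)"

text \<open>Sobolev space W^{1,2}_loc(R): eta is the integral of a locally
  square-integrable (weak derivative) function g.\<close>
definition W12_loc :: "(real \<Rightarrow> real) \<Rightarrow> bool" where
  "W12_loc \<eta> \<longleftrightarrow> (\<exists>g. g \<in> borel_measurable lborel \<and>
      (\<forall>a b. a \<le> b \<longrightarrow>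
         set_integrable lborel {a..b} g \<and>
         set_integrable lborel {a..b} (\<lambda>t. (g t)\<^sup>2) \<and>
         \<eta> b - \<eta> a = (\<integral>t\<in>{a..b}. g t \<partial>lborel)))"

text \<open>Wirtinger derivatives (via the real differential, D 1 = f_x, D i = f_y).\<close>
definition dz :: "(complex \<Rightarrow> complex) \<Rightarrow> complex \<Rightarrow> complex" where
  "dz f z = (frechet_derivative f (at z) 1 - \<i> * frechet_derivative f (at z) \<i>) / 2"

definition dzbar :: "(complex \<Rightarrow> complex) \<Rightarrow> complex \<Rightarrow> complex" where
  "dzbar f z = (frechet_derivative f (at z) 1 + \<i> * frechet_derivative f (at z) \<i>) / 2"

definition beltrami_ae ::
  "(complex \<Rightarrow> complex) \<Rightarrow> (complex \<Rightarrow> complex) \<Rightarrow> (complex \<Rightarrow> complex) \<Rightarrow> bool" where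
  "beltrami_ae f \<mu> \<nu> \<longleftrightarrow>
     (AE z in lborel. f differentiable (at z) \<and>
        dzbar f z = \<mu> z * dz f z + \<nu> z * cnj (dz f z))"

definition polar_map :: "real \<Rightarrow> (real \<Rightarrow> real) \<Rightarrow> (real \<Rightarrow> real) \<Rightarrow> complex \<Rightarrow> complex" where
  "polar_map \<alpha> \<eta>1 \<eta>2 z =
     (if z = 0 then 0 else complex_of_real (cmod z powr \<alpha>) * Complex (\<eta>1 (Arg z)) (\<eta>2 (Arg z)))"

definition mu_of :: "(real \<Rightarrow> real) \<Rightarrow> complex \<Rightarrow> complex" where
  "mu_of \<mu>0 z = - complex_of_real (\<mu>0 (Arg z)) * z / cnj z"

definition nu_of :: "(real \<Rightarrow> real) \<Rightarrow> complex \<Rightarrow> complex" where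
  "nu_of \<nu>0 z = - complex_of_real (\<nu>0 (Arg z))"

end

theory Submission
  imports Defs
begin



lemma H_deriv:
  fixes w :: complex
  assumes d1: "(\<eta>1 has_real_derivative d1) (at (Im w))"
      and d2: "(\<eta>2 has_real_derivative d2) (at (Im w))"
  shows "((\<lambda>u. complex_of_real (exp (\<alpha> * Re u)) * Complex (\<eta>1 (Im u)) (\<eta>2 (Im u))) has_derivative
     (\<lambda>h. complex_of_real (exp (\<alpha> * Re w)) * (complex_of_real \<alpha> * Complex (\<eta>1 (Im w)) (\<eta>2 (Im w)) * complex_of_real (Re h)
          + Complex d1 d2 * complex_of_real (Im h)))) (at w)"
proof -
  have e: "(\<lambda>u. Complex (\<eta>1 (Im u)) (\<eta>2 (Im u))) = (\<lambda>u. complex_of_real (\<eta>1 (Im u)) + \<i> * complex_of_real (\<eta>2 (Im u)))"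
    by (auto simp: complex_eq_iff)
  have A: "((\<lambda>u. \<eta>1 (Im u)) has_derivative (\<lambda>h. Im h * d1)) (at w)"
    by (rule DERIV_compose_FDERIV[OF d1 has_derivative_Im[OF has_derivative_ident]])
  have B: "((\<lambda>u. \<eta>2 (Im u)) has_derivative (\<lambda>h. Im h * d2)) (at w)"
    by (rule DERIV_compose_FDERIV[OF d2 has_derivative_Im[OF has_derivative_ident]])
  have C: "((\<lambda>u. exp (\<alpha> * Re u)) has_derivative (\<lambda>h. Re h * (exp (\<alpha> * Re w) * \<alpha>))) (at w)"
    by (rule DERIV_compose_FDERIV[where f="\<lambda>x. exp (\<alpha> * x)"]) (auto intro!: derivative_eq_intros)
  have "((\<lambda>u. complex_of_real (exp (\<alpha> * Re u)) * (complex_of_real (\<eta>1 (Im u)) + \<i> * complex_of_real (\<eta>2 (Im u)))) has_derivative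
     (\<lambda>h. complex_of_real (exp (\<alpha> * Re w)) * (complex_of_real (Im h * d1) + \<i> * complex_of_real (Im h * d2))
       + complex_of_real (Re h * (exp (\<alpha> * Re w) * \<alpha>)) * (complex_of_real (\<eta>1 (Im w)) + \<i> * complex_of_real (\<eta>2 (Im w))))) (at w)"
    by (intro has_derivative_mult has_derivative_add has_derivative_mult_right has_derivative_of_real A B C)
  then show ?thesis unfolding Complex_eq
    by (rule has_derivative_eq_rhs) (auto simp: fun_eq_iff complex_eq_iff algebra_simps)
qed

definition Hder :: "real \<Rightarrow> real \<Rightarrow> complex \<Rightarrow> complex \<Rightarrow> complex \<Rightarrow> complex" where
  "Hder \<alpha> e \<eta> \<eta>' k = complex_of_real e * (complex_of_real \<alpha> * \<eta> * complex_of_real (Re k) + \<eta>' * complex_of_real (Im k))"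

lemma exp_slit: "-pi < Im w \<Longrightarrow> Im w < pi \<Longrightarrow> exp w \<notin> \<real>\<^sub>\<le>\<^sub>0"
proof
  assume a: "-pi < Im w" "Im w < pi" "exp w \<in> \<real>\<^sub>\<le>\<^sub>0"
  have ne: "exp w \<noteq> 0" by simp
  have "Re (exp w) \<le> 0" "Im (exp w) = 0" using a(3) by (auto simp: complex_nonpos_Reals_iff)
  then have "Re (exp w) < 0" using ne by (metis complex_eq_iff order_less_le zero_complex.simps)
  then have "Im (Ln (exp w)) = pi" using Im_Ln_eq_pi[OF ne] \<open>Im (exp w) = 0\<close> by simp
  moreover have "Ln (exp w) = w" using a by simp
  ultimately show False using a by simp
qed

lemma polar_map_slit:
  assumes "v \<notin> \<real>\<^sub>\<le>\<^sub>0"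
  shows "polar_map \<alpha> \<eta>1 \<eta>2 v = complex_of_real (exp (\<alpha> * Re (Ln v))) * Complex (\<eta>1 (Im (Ln v))) (\<eta>2 (Im (Ln v)))"
proof -
  have v: "v \<noteq> 0" using assms by auto
  then show ?thesis using v by (simp add: polar_map_def powr_def Arg_eq_Im_Ln mult.commute)
qed

lemma polar_deriv:
  assumes w: "-pi < Im w" "Im w < pi"
      and d1: "(\<eta>1 has_real_derivative d1) (at (Im w))"
      and d2: "(\<eta>2 has_real_derivative d2) (at (Im w))"
  shows "(polar_map \<alpha> \<eta>1 \<eta>2 has_derivative
     (\<lambda>h. Hder \<alpha> (exp (\<alpha> * Re w)) (Complex (\<eta>1 (Im w)) (\<eta>2 (Im w))) (Complex d1 d2) (inverse (exp w) * h))) (at (exp w))"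
proof -
  have sl: "exp w \<notin> \<real>\<^sub>\<le>\<^sub>0" using exp_slit w by auto
  have L: "(Ln has_derivative (\<lambda>h. inverse (exp w) * h)) (at (exp w))"
    using has_field_derivative_Ln[OF sl] unfolding has_field_derivative_def by simp
  have lw: "Ln (exp w) = w" using w by simp
  have H: "((\<lambda>u. complex_of_real (exp (\<alpha> * Re u)) * Complex (\<eta>1 (Im u)) (\<eta>2 (Im u))) has_derivative
     (\<lambda>h. Hder \<alpha> (exp (\<alpha> * Re w)) (Complex (\<eta>1 (Im w)) (\<eta>2 (Im w))) (Complex d1 d2) h)) (at (Ln (exp w)))"
    unfolding lw Hder_def using H_deriv[OF d1 d2] .
  have "((\<lambda>v. complex_of_real (exp (\<alpha> * Re (Ln v))) * Complex (\<eta>1 (Im (Ln v))) (\<eta>2 (Im (Ln v)))) has_derivative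
     (\<lambda>h. Hder \<alpha> (exp (\<alpha> * Re w)) (Complex (\<eta>1 (Im w)) (\<eta>2 (Im w))) (Complex d1 d2) (inverse (exp w) * h))) (at (exp w))"
    using has_derivative_compose[OF L H] .
  then show ?thesis
    by (rule has_derivative_transform_within_open[where s="- \<real>\<^sub>\<le>\<^sub>0"])
       (auto simp: sl polar_map_slit)
qed

lemma Hder_plus: "Hder \<alpha> e \<eta> \<eta>' c + \<i> * Hder \<alpha> e \<eta> \<eta>' (c * \<i>) = complex_of_real e * cnj c * (complex_of_real \<alpha> * \<eta> + \<i> * \<eta>')"
  by (simp add: Hder_def complex_eq_iff algebra_simps)

lemma Hder_minus: "Hder \<alpha> e \<eta> \<eta>' c - \<i> * Hder \<alpha> e \<eta> \<eta>' (c * \<i>) = complex_of_real e * c * (complex_of_real \<alpha> * \<eta> - \<i> * \<eta>')"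
  by (simp add: Hder_def complex_eq_iff algebra_simps)

lemma wirt_iff:
  fixes z X Y :: complex and e m n :: real
  assumes z: "z \<noteq> 0" and e: "e \<noteq> 0"
  shows "(complex_of_real e * cnj (inverse z) * X / 2 =
          (- complex_of_real m * z / cnj z) * (complex_of_real e * inverse z * Y / 2)
          + (- complex_of_real n) * cnj (complex_of_real e * inverse z * Y / 2))
     \<longleftrightarrow> X = - complex_of_real m * Y - complex_of_real n * cnj Y"
proof -
  have cz: "cnj z \<noteq> 0" using z by simp
  have 1: "(- complex_of_real m * z / cnj z) * (complex_of_real e * inverse z * Y / 2)
        = complex_of_real e * cnj (inverse z) * (- complex_of_real m * Y) / 2"
    using z cz by (simp add: field_simps)
  have 2: "(- complex_of_real n) * cnj (complex_of_real e * inverse z * Y / 2)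
        = complex_of_real e * cnj (inverse z) * (- complex_of_real n * cnj Y) / 2"
    by simp
  have nz: "complex_of_real e * cnj (inverse z) \<noteq> 0" using z e by simp
  have 3: "complex_of_real e * cnj (inverse z) * (- complex_of_real m * Y) / 2 + complex_of_real e * cnj (inverse z) * (- complex_of_real n * cnj Y) / 2
     = complex_of_real e * cnj (inverse z) * (- complex_of_real m * Y - complex_of_real n * cnj Y) / 2"
    by (simp add: algebra_simps add_divide_distrib)
  show ?thesis unfolding 1 2 3
    using nz by (metis (no_types, lifting) divide_cancel_right mult_left_cancel zero_neq_numeral)
qed

lemma XY_iff:
  fixes a b d1 d2 \<alpha> m n :: real
  shows "(complex_of_real \<alpha> * Complex a b + \<i> * Complex d1 d2 =
      - complex_of_real m * (complex_of_real \<alpha> * Complex a b - \<i> * Complex d1 d2)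
      - complex_of_real n * cnj (complex_of_real \<alpha> * Complex a b - \<i> * Complex d1 d2))
   \<longleftrightarrow> (\<alpha> * a - d2 = - (m + n) * (\<alpha> * a + d2) \<and> \<alpha> * b + d1 = (n - m) * (\<alpha> * b - d1))"
  by (simp add: complex_eq_iff algebra_simps)

lemma point_eq:
  assumes w: "-pi < Im w" "Im w < pi"
      and d1: "(\<eta>1 has_real_derivative d1) (at (Im w))"
      and d2: "(\<eta>2 has_real_derivative d2) (at (Im w))"
  shows "polar_map \<alpha> \<eta>1 \<eta>2 differentiable (at (exp w))"
    and "(dzbar (polar_map \<alpha> \<eta>1 \<eta>2) (exp w) = mu_of \<mu>0 (exp w) * dz (polar_map \<alpha> \<eta>1 \<eta>2) (exp w)
            + nu_of \<nu>0 (exp w) * cnj (dz (polar_map \<alpha> \<eta>1 \<eta>2) (exp w)))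
       \<longleftrightarrow> (\<alpha> * \<eta>1 (Im w) - d2 = - (\<mu>0 (Im w) + \<nu>0 (Im w)) * (\<alpha> * \<eta>1 (Im w) + d2) \<and>
            \<alpha> * \<eta>2 (Im w) + d1 = (\<nu>0 (Im w) - \<mu>0 (Im w)) * (\<alpha> * \<eta>2 (Im w) - d1))"
proof -
  let ?e = "exp (\<alpha> * Re w)" and ?\<eta> = "Complex (\<eta>1 (Im w)) (\<eta>2 (Im w))" and ?\<eta>' = "Complex d1 d2"
  let ?c = "inverse (exp w)"
  note D = polar_deriv[OF w d1 d2, of \<alpha>]
  then show "polar_map \<alpha> \<eta>1 \<eta>2 differentiable (at (exp w))"
    unfolding differentiable_def by blast
  have fd: "frechet_derivative (polar_map \<alpha> \<eta>1 \<eta>2) (at (exp w)) = (\<lambda>h. Hder \<alpha> ?e ?\<eta> ?\<eta>' (?c * h))"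
    using frechet_derivative_at[OF D] by simp
  have dzb: "dzbar (polar_map \<alpha> \<eta>1 \<eta>2) (exp w) = complex_of_real ?e * cnj ?c * (complex_of_real \<alpha> * ?\<eta> + \<i> * ?\<eta>') / 2"
    unfolding dzbar_def fd using Hder_plus[of \<alpha> ?e ?\<eta> ?\<eta>' ?c] by simp
  have dzz: "dz (polar_map \<alpha> \<eta>1 \<eta>2) (exp w) = complex_of_real ?e * ?c * (complex_of_real \<alpha> * ?\<eta> - \<i> * ?\<eta>') / 2"
    unfolding dz_def fd using Hder_minus[of \<alpha> ?e ?\<eta> ?\<eta>' ?c] by simp
  have arg: "Arg (exp w) = Im w" using w by (simp add: Arg_eq_Im_Ln)
  show "(dzbar (polar_map \<alpha> \<eta>1 \<eta>2) (exp w) = mu_of \<mu>0 (exp w) * dz (polar_map \<alpha> \<eta>1 \<eta>2) (exp w)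
            + nu_of \<nu>0 (exp w) * cnj (dz (polar_map \<alpha> \<eta>1 \<eta>2) (exp w)))
       \<longleftrightarrow> (\<alpha> * \<eta>1 (Im w) - d2 = - (\<mu>0 (Im w) + \<nu>0 (Im w)) * (\<alpha> * \<eta>1 (Im w) + d2) \<and>
            \<alpha> * \<eta>2 (Im w) + d1 = (\<nu>0 (Im w) - \<mu>0 (Im w)) * (\<alpha> * \<eta>2 (Im w) - d1))"
    unfolding dzb dzz mu_of_def nu_of_def arg
    unfolding wirt_iff[OF exp_not_eq_zero exp_not_eq_zero] XY_iff by (simp add: algebra_simps)
qed

lemma exp_strip_eq:
  assumes "-pi < t" "t < pi"
  shows "polar_map \<alpha> \<eta>1 \<eta>2 (exp (Complex s t)) = complex_of_real (exp (\<alpha> * s)) * Complex (\<eta>1 t) (\<eta>2 t)"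
  using assms by (simp add: polar_map_slit exp_slit)

lemma diff_component:
  fixes F :: "complex \<Rightarrow> complex"
  assumes F: "F differentiable (at (exp (Complex s t0)))" and t0: "-pi < t0" "t0 < pi"
    and eq: "\<And>t. -pi < t \<Longrightarrow> t < pi \<Longrightarrow> g t = L (F (exp (Complex s t))) / c"
    and L: "bounded_linear L"
  shows "\<exists>d. (g has_real_derivative d) (at t0)"
proof -
  obtain F' where F': "(F has_derivative F') (at (exp (Complex s t0)))" using F unfolding differentiable_def by blast
  let ?v = "\<i> * exp (Complex s t0)"
  have G: "((\<lambda>t. exp (complex_of_real s + \<i> * complex_of_real t)) has_derivative (\<lambda>h. complex_of_real h * ?v)) (at t0)"
  proof -
    have U: "((\<lambda>t. complex_of_real s + \<i> * complex_of_real t) has_derivative (\<lambda>h. 0 + \<i> * complex_of_real h)) (at t0)"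
      by (intro has_derivative_add has_derivative_const has_derivative_mult_right has_derivative_of_real has_derivative_ident)
    have E: "(exp has_derivative (\<lambda>h. exp (complex_of_real s + \<i> * complex_of_real t0) * h)) (at (complex_of_real s + \<i> * complex_of_real t0))"
      using DERIV_exp[of "complex_of_real s + \<i> * complex_of_real t0"] unfolding has_field_derivative_def by simp
    show ?thesis using has_derivative_compose[OF U E] by (simp add: Complex_eq algebra_simps)
  qed
  have ge: "(\<lambda>t. exp (Complex s t)) = (\<lambda>t. exp (complex_of_real s + \<i> * complex_of_real t))"
    by (simp add: Complex_eq)
  have G': "((\<lambda>t. exp (Complex s t)) has_derivative (\<lambda>h. complex_of_real h * ?v)) (at t0)"
    using G unfolding ge .
  have FG: "((\<lambda>t. F (exp (Complex s t))) has_derivative (\<lambda>h. F' (complex_of_real h * ?v))) (at t0)"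
    using has_derivative_compose[OF G' F'] by simp
  have R: "((\<lambda>t. L (F (exp (Complex s t))) / c) has_derivative (\<lambda>h. L (F' (complex_of_real h * ?v)) / c)) (at t0)"
    using bounded_linear.has_derivative[OF bounded_linear_divide[of c] bounded_linear.has_derivative[OF L FG]] .
  have lin: "linear F'" using has_derivative_linear[OF F'] .
  have "((\<lambda>t. L (F (exp (Complex s t))) / c) has_real_derivative (L (F' ?v) / c)) (at t0)"
  proof (rule has_derivative_imp_has_field_derivative[OF R])
    fix x :: real
    have "F' (complex_of_real x * ?v) = x *\<^sub>R F' ?v"
      using linear_scale[OF lin, of x ?v] by (simp add: scaleR_conv_of_real)
    moreover have "L (x *\<^sub>R F' ?v) = x *\<^sub>R L (F' ?v)"
      using linear_scale[OF bounded_linear.linear[OF L]] by blast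
    ultimately show "x * (L (F' ?v) / c) = L (F' (complex_of_real x * ?v)) / c" by simp
  qed
  then have "(g has_real_derivative (L (F' ?v) / c)) (at t0)"
    by (rule has_field_derivative_transform_within_open[where S="{-pi<..<pi}"]) (use t0 eq in auto)
  then show ?thesis by blast
qed



lemma neg_iff: "negligible A \<longleftrightarrow> (\<exists>N \<in> null_sets lborel. A \<subseteq> N)"
  by (simp add: negligible_iff_null_sets null_sets_completion_iff2)

lemma AE_lborel_iff_negligible: "(AE x in lborel. P x) \<longleftrightarrow> negligible {x. \<not> P x}"
proof -
  have "(AE x in lborel. P x) \<longleftrightarrow> (AE x in lebesgue. P x)" by (simp add: AE_completion_iff)
  also have "\<dots> \<longleftrightarrow> (\<exists>N. negligible N \<and> {x. \<not> P x} \<subseteq> N)" by (rule eventually_ae_filter_negligible)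
  also have "\<dots> \<longleftrightarrow> negligible {x. \<not> P x}"
  proof
    assume "\<exists>N. negligible N \<and> {x. \<not> P x} \<subseteq> N"
    then obtain N where "negligible N" "{x. \<not> P x} \<subseteq> N" by blast
    then show "negligible {x. \<not> P x}" by (rule negligible_subset)
  next
    assume "negligible {x. \<not> P x}"
    then show "\<exists>N. negligible N \<and> {x. \<not> P x} \<subseteq> N" by blast
  qed
  finally show ?thesis .
qed

lemma negligible_UNIV_Times:
  fixes N :: "real set"
  assumes "negligible N"
  shows "negligible ((UNIV :: real set) \<times> N)"
proof -
  obtain N' where N': "N' \<in> null_sets lborel" "N \<subseteq> N'" using assms neg_iff by blast
  have "(UNIV :: real set) \<times> N' \<in> null_sets (lborel \<Otimes>\<^sub>M lborel)"
    using sigma_finite_measure.times_in_null_sets2[OF sigma_finite_lborel, of UNIV lborel N'] N' by simp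
  then have "(UNIV :: real set) \<times> N' \<in> null_sets (lborel :: (real \<times> real) measure)"
    by (simp add: lborel_prod)
  then show ?thesis unfolding neg_iff using N'(2) by (intro bexI[of _ "UNIV \<times> N'"]) auto
qed

lemma negligible_from_UNIV_Times:
  fixes B :: "real set"
  assumes "negligible ((UNIV :: real set) \<times> B)"
  shows "negligible B"
proof -
  obtain P where P: "P \<in> null_sets (lborel :: (real \<times> real) measure)" "UNIV \<times> B \<subseteq> P"
    using assms unfolding neg_iff by blast
  have "AE x in lborel \<Otimes>\<^sub>M lborel. x \<notin> P"
    unfolding lborel_prod using AE_not_in[OF P(1)] .
  then have ae: "AE s in lborel. AE t in lborel. (s, t) \<notin> P"
    by (rule lborel_pair.AE_pair)
  have "\<exists>s. AE t in lborel. (s, t) \<notin> P"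
  proof (rule ccontr)
    assume "\<not> ?thesis"
    then have "AE s in (lborel :: real measure). False" using ae by (auto elim: eventually_mono)
    then have "ae_filter (lborel :: real measure) = bot" by (simp add: trivial_limit_def)
    then show False by (simp add: ae_filter_eq_bot_iff)
  qed
  then obtain s where s: "AE t in lborel. (s, t) \<notin> P" by blast
  then have "negligible {t. \<not> (s, t) \<notin> P}" using AE_lborel_iff_negligible[of "\<lambda>t. (s, t) \<notin> P"] by simp
  moreover have "B \<subseteq> {t. \<not> (s, t) \<notin> P}" using P(2) by auto
  ultimately show ?thesis by (rule negligible_subset)
qed

lemma negligible_Arg_preimage:
  assumes "negligible N"
  shows "negligible {z. z \<noteq> 0 \<and> Arg z \<in> N}"
proof -
  let ?P = "\<lambda>x::real \<times> real. exp (Complex (fst x) (snd x))"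
  have d: "?P differentiable (at x)" for x
  proof -
    have U: "((\<lambda>x::real\<times>real. complex_of_real (fst x) + \<i> * complex_of_real (snd x)) has_derivative
       (\<lambda>h. complex_of_real (fst h) + \<i> * complex_of_real (snd h))) (at x)"
      by (intro has_derivative_add has_derivative_mult_right has_derivative_of_real has_derivative_fst has_derivative_snd has_derivative_ident)
    have E: "(exp has_derivative (\<lambda>h. exp (complex_of_real (fst x) + \<i> * complex_of_real (snd x)) * h)) (at (complex_of_real (fst x) + \<i> * complex_of_real (snd x)))"
      using DERIV_exp[of "complex_of_real (fst x) + \<i> * complex_of_real (snd x)"] unfolding has_field_derivative_def by simp
    show ?thesis using has_derivative_compose[OF U E] unfolding Complex_eq differentiable_def by blast
  qed
  have "negligible (?P ` (UNIV \<times> N))"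
    by (rule negligible_differentiable_image_negligible) (use negligible_UNIV_Times[OF assms] d in \<open>auto simp: differentiable_at_imp_differentiable_on\<close>)
  moreover have "{z. z \<noteq> 0 \<and> Arg z \<in> N} \<subseteq> ?P ` (UNIV \<times> N)"
  proof
    fix z assume z: "z \<in> {z. z \<noteq> 0 \<and> Arg z \<in> N}"
    then have zz: "z \<noteq> 0" by simp
    have "?P (Re (Ln z), Arg z) = exp (Ln z)"
      by (simp only: fst_conv snd_conv Arg_eq_Im_Ln[OF zz] complex.collapse)
    then have "z = ?P (Re (Ln z), Arg z)" using zz by simp
    then show "z \<in> ?P ` (UNIV \<times> N)" using z by blast
  qed
  ultimately show ?thesis by (rule negligible_subset)
qed

lemma negligible_ray_set:
  fixes Z :: "complex set"
  assumes "negligible Z"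
  shows "negligible {t. -pi < t \<and> t < pi \<and> (\<forall>s. exp (Complex s t) \<in> Z)}" (is "negligible ?B")
proof -
  let ?S = "- \<real>\<^sub>\<le>\<^sub>0 :: complex set"
  let ?Q = "\<lambda>z. (Re (Ln z), Im (Ln z))"
  have d: "?Q differentiable (at z)" if "z \<in> ?S" for z
  proof -
    have L: "(Ln has_derivative (\<lambda>h. inverse z * h)) (at z)"
      using has_field_derivative_Ln[of z] that unfolding has_field_derivative_def by simp
    have "(?Q has_derivative (\<lambda>h. (Re (inverse z * h), Im (inverse z * h)))) (at z)"
      by (intro has_derivative_Pair has_derivative_Re has_derivative_Im L)
    then show ?thesis unfolding differentiable_def by blast
  qed
  have "negligible (?Q ` (Z \<inter> ?S))"
    by (rule negligible_differentiable_image_negligible) (use assms in \<open>auto intro: negligible_subset differentiable_at_imp_differentiable_on d\<close>)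
  moreover have "UNIV \<times> ?B \<subseteq> ?Q ` (Z \<inter> ?S)"
  proof
    fix x assume x: "x \<in> (UNIV :: real set) \<times> ?B"
    obtain s t where st: "x = (s, t)" by (cases x)
    then have t: "-pi < t" "t < pi" "exp (Complex s t) \<in> Z" using x by auto
    have "Ln (exp (Complex s t)) = Complex s t" using t by simp
    then have "x = ?Q (exp (Complex s t))" using st by simp
    moreover have "exp (Complex s t) \<in> ?S" using exp_slit[of "Complex s t"] t by simp
    ultimately show "x \<in> ?Q ` (Z \<inter> ?S)" using t by blast
  qed
  ultimately have "negligible ((UNIV :: real set) \<times> ?B)" by (rule negligible_subset)
  then show ?thesis by (rule negligible_from_UNIV_Times)
qed




lemma periodic_int:
  assumes P: "\<And>t. Q (t + 2*pi) = Q t"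
  shows "Q (t + 2*pi* of_int k) = Q t"
proof -
  have n: "Q (t + 2*pi* real n) = Q t" for n :: nat and t
  proof (induction n)
    case 0 then show ?case by simp
  next
    case (Suc n)
    have "Q (t + 2*pi* real (Suc n)) = Q ((t + 2*pi* real n) + 2*pi)" by (simp add: algebra_simps)
    also have "\<dots> = Q (t + 2*pi* real n)" by (rule P)
    finally show ?case using Suc by simp
  qed
  show ?thesis
  proof (cases "k \<ge> 0")
    case True
    then obtain n where "k = int n" using nonneg_int_cases by blast
    then show ?thesis using n by simp
  next
    case False
    then obtain n where kn: "k = - int n" by (metis le_cases neg_int_cases less_le_not_le)
    have "Q t = Q ((t + 2*pi* of_int k) + 2*pi* real n)" using kn by simp
    also have "\<dots> = Q (t + 2*pi* of_int k)" by (rule n)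
    finally show ?thesis by simp
  qed
qed

lemma AE_from_strip:
  assumes P: "\<And>t. Q (t + 2*pi) = Q t"
    and B: "negligible {t. -pi < t \<and> t < pi \<and> \<not> Q t}"
  shows "AE t in lborel. Q t"
proof -
  let ?B = "{t. -pi < t \<and> t < pi \<and> \<not> Q t} \<union> {-pi}"
  have nB: "negligible ?B" using B by simp
  have sub: "{t. \<not> Q t} \<subseteq> (\<Union>k\<in>(UNIV::int set). (+) (2*pi* of_int k) ` ?B)"
  proof
    fix t assume t: "t \<in> {t. \<not> Q t}"
    define k where "k = \<lfloor>(t + pi) / (2*pi)\<rfloor>"
    have k1: "of_int k \<le> (t + pi) / (2*pi)" unfolding k_def by (rule of_int_floor_le)
    have k2: "(t + pi) / (2*pi) < of_int k + 1" unfolding k_def by (rule real_of_int_floor_add_one_gt)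
    define t0 where "t0 = t - 2*pi* of_int k"
    have a: "-pi \<le> t0" using k1 pi_gt_zero unfolding t0_def by (simp add: field_simps)
    have b: "t0 < pi" using k2 pi_gt_zero unfolding t0_def by (simp add: field_simps)
    have "Q t0 = Q (t0 + 2*pi* of_int k)" using periodic_int[of Q t0 k, OF P] by simp
    also have "\<dots> = Q t" unfolding t0_def by simp
    finally have "\<not> Q t0" using t by simp
    then have "t0 \<in> ?B" using a b by auto
    moreover have "t = 2*pi* of_int k + t0" unfolding t0_def by simp
    ultimately show "t \<in> (\<Union>k\<in>(UNIV::int set). (+) (2*pi* of_int k) ` ?B)" by blast
  qed
  have "negligible (\<Union>k\<in>(UNIV::int set). (+) (2*pi* of_int k) ` ?B)"
    by (rule negligible_countable_Union) (use negligible_translation[OF nB] in auto)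
  then have "negligible {t. \<not> Q t}" using sub by (rule negligible_subset)
  then show ?thesis by (simp add: AE_lborel_iff_negligible)
qed

lemma deriv_periodic:
  assumes "periodic2pi f"
  shows "(f has_real_derivative D) (at (t + 2*pi)) \<longleftrightarrow> (f has_real_derivative D) (at t)"
proof -
  have "(\<lambda>x. f (x + 2*pi)) = f" using assms unfolding periodic2pi_def by auto
  then show ?thesis using DERIV_shift[of f D t "2*pi"] by simp
qed



lemma conv_alg:
  fixes k1 k2 \<alpha> a b :: real
  assumes "k1 > 0" "k2 > 0"
  defines "m \<equiv> (k1 - k2) / (1 + k1 + k2 + k1 * k2)" and "n \<equiv> (k1 * k2 - 1) / (1 + k1 + k2 + k1 * k2)"
  shows "\<alpha> * a - \<alpha> * k1 * a = - (m + n) * (\<alpha> * a + \<alpha> * k1 * a)"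
    and "\<alpha> * b + - \<alpha> / k2 * b = (n - m) * (\<alpha> * b - - \<alpha> / k2 * b)"
proof -
  have D: "1 + k1 + k2 + k1 * k2 = (1 + k1) * (1 + k2)" by (simp add: algebra_simps)
  have Dp: "1 + k1 + k2 + k1 * k2 > 0" using assms(1,2) by (simp add: add_pos_pos)
  have k2z: "1 + k2 \<noteq> 0" "1 + k1 \<noteq> 0" using assms(1,2) by linarith+
  have "m + n = ((k1 - k2) + (k1 * k2 - 1)) / (1 + k1 + k2 + k1 * k2)"
    unfolding m_def n_def by (simp add: add_divide_distrib)
  also have "\<dots> = ((k1 - 1) * (1 + k2)) / ((1 + k1) * (1 + k2))"
    by (simp add: D algebra_simps)
  also have "\<dots> = (k1 - 1) / (1 + k1)" using k2z by simp
  finally have mn: "m + n = (k1 - 1) / (1 + k1)" .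
  have "n - m = ((k1 * k2 - 1) - (k1 - k2)) / (1 + k1 + k2 + k1 * k2)"
    unfolding m_def n_def by (simp add: diff_divide_distrib)
  also have "\<dots> = ((k2 - 1) * (1 + k1)) / ((1 + k2) * (1 + k1))"
    by (simp add: D algebra_simps)
  also have "\<dots> = (k2 - 1) / (1 + k2)" using k2z by simp
  finally have nm: "n - m = (k2 - 1) / (1 + k2)" .
  show "\<alpha> * a - \<alpha> * k1 * a = - (m + n) * (\<alpha> * a + \<alpha> * k1 * a)"
    unfolding mn using assms(1) by (simp add: field_simps)
  show "\<alpha> * b + - \<alpha> / k2 * b = (n - m) * (\<alpha> * b - - \<alpha> / k2 * b)"
  proof -
    have "k2 + k2 * k2 > 0" using assms(2) by (simp add: add_pos_pos)
    then show ?thesis unfolding nm using assms(2) k2z by (simp add: field_simps)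
  qed
qed

lemma fwd_alg:
  fixes m n \<alpha> a b d1 d2 c :: real
  assumes bnd: "\<bar>m\<bar> + \<bar>n\<bar> \<le> c" "c < 1"
    and A: "\<alpha> * a - d2 = - (m + n) * (\<alpha> * a + d2)"
    and B: "\<alpha> * b + d1 = (n - m) * (\<alpha> * b - d1)"
  shows "(1 + m + n) / (1 - m - n) > 0" "(1 - m + n) / (1 + m - n) > 0"
    "d1 = - \<alpha> / ((1 - m + n) / (1 + m - n)) * b"
    "d2 = \<alpha> * ((1 + m + n) / (1 - m - n)) * a"
proof -
  have p1: "1 - m - n > 0" "1 + m + n > 0" "1 - m + n > 0" "1 + m - n > 0"
    using bnd abs_ge_self[of m] abs_ge_minus_self[of m] abs_ge_self[of n] abs_ge_minus_self[of n] by linarith+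
  show "(1 + m + n) / (1 - m - n) > 0" "(1 - m + n) / (1 + m - n) > 0" using p1 by simp_all
  have A': "d2 * (1 - m - n) = \<alpha> * a * (1 + m + n)" using A by (simp add: algebra_simps)
  show "d2 = \<alpha> * ((1 + m + n) / (1 - m - n)) * a" using A' p1 by (simp add: field_simps)
  have B': "d1 * (1 - m + n) = - \<alpha> * b * (1 + m - n)" using B by (simp add: algebra_simps)
  show "d1 = - \<alpha> / ((1 - m + n) / (1 + m - n)) * b" using B' p1 by (simp add: field_simps)
qed




theorem proposition1:
  fixes \<alpha> :: real and \<eta>1 \<eta>2 :: "real \<Rightarrow> real"
  assumes "\<alpha> > 0"
    and "W12_loc \<eta>1" and "W12_loc \<eta>2"
    and "periodic2pi \<eta>1" and "periodic2pi \<eta>2"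
  shows "(\<forall>\<mu>0 \<nu>0 :: real \<Rightarrow> real.
            \<mu>0 \<in> borel_measurable lborel \<and> \<nu>0 \<in> borel_measurable lborel \<and>
            bounded (range \<mu>0) \<and> bounded (range \<nu>0) \<and>
            periodic2pi \<mu>0 \<and> periodic2pi \<nu>0 \<and>
            (\<exists>c<1. AE t in lborel. \<bar>\<mu>0 t\<bar> + \<bar>\<nu>0 t\<bar> \<le> c) \<and>
            beltrami_ae (polar_map \<alpha> \<eta>1 \<eta>2) (mu_of \<mu>0) (nu_of \<nu>0)
          \<longrightarrow>
            (let k1 = (\<lambda>t. (1 + \<mu>0 t + \<nu>0 t) / (1 - \<mu>0 t - \<nu>0 t));
                 k2 = (\<lambda>t. (1 - \<mu>0 t + \<nu>0 t) / (1 + \<mu>0 t - \<nu>0 t))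
             in AE t in lborel. k1 t > 0 \<and> k2 t > 0 \<and>
                  (\<eta>1 has_real_derivative (- \<alpha> / k2 t * \<eta>2 t)) (at t) \<and>
                  (\<eta>2 has_real_derivative (\<alpha> * k1 t * \<eta>1 t)) (at t)))
       \<and>
         (\<forall>k1 k2 :: real \<Rightarrow> real.
            periodic2pi k1 \<and> periodic2pi k2 \<and>
            (\<exists>m M. 0 < m \<and> (\<forall>t. m \<le> k1 t \<and> k1 t \<le> M \<and> m \<le> k2 t \<and> k2 t \<le> M)) \<and>
            (AE t in lborel. (\<eta>1 has_real_derivative (- \<alpha> / k2 t * \<eta>2 t)) (at t) \<and>
                             (\<eta>2 has_real_derivative (\<alpha> * k1 t * \<eta>1 t)) (at t))
          \<longrightarrow>
            beltrami_ae (polar_map \<alpha> \<eta>1 \<eta>2)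
              (mu_of (\<lambda>t. (k1 t - k2 t) / (1 + k1 t + k2 t + k1 t * k2 t)))
              (nu_of (\<lambda>t. (k1 t * k2 t - 1) / (1 + k1 t + k2 t + k1 t * k2 t))))"
  proof (intro conjI allI impI)
  let ?F = "polar_map \<alpha> \<eta>1 \<eta>2"
  have p1: "periodic2pi \<eta>1" and p2: "periodic2pi \<eta>2" using assms by auto
  fix \<mu>0 \<nu>0 :: "real \<Rightarrow> real"
  assume H: "\<mu>0 \<in> borel_measurable lborel \<and> \<nu>0 \<in> borel_measurable lborel \<and>
            bounded (range \<mu>0) \<and> bounded (range \<nu>0) \<and>
            periodic2pi \<mu>0 \<and> periodic2pi \<nu>0 \<and>
            (\<exists>c<1. AE t in lborel. \<bar>\<mu>0 t\<bar> + \<bar>\<nu>0 t\<bar> \<le> c) \<and>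
            beltrami_ae (polar_map \<alpha> \<eta>1 \<eta>2) (mu_of \<mu>0) (nu_of \<nu>0)"
  then have pm: "periodic2pi \<mu>0" and pn: "periodic2pi \<nu>0"
    and bel: "beltrami_ae ?F (mu_of \<mu>0) (nu_of \<nu>0)" by auto
  obtain c where c1: "c < 1" and cae: "AE t in lborel. \<bar>\<mu>0 t\<bar> + \<bar>\<nu>0 t\<bar> \<le> c" using H by blast
  define k1 where "k1 = (\<lambda>t. (1 + \<mu>0 t + \<nu>0 t) / (1 - \<mu>0 t - \<nu>0 t))"
  define k2 where "k2 = (\<lambda>t. (1 - \<mu>0 t + \<nu>0 t) / (1 + \<mu>0 t - \<nu>0 t))"
  define Q where "Q = (\<lambda>t. \<bar>\<mu>0 t\<bar> + \<bar>\<nu>0 t\<bar> \<le> c \<longrightarrow> k1 t > 0 \<and> k2 t > 0 \<and>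
                  (\<eta>1 has_real_derivative (- \<alpha> / k2 t * \<eta>2 t)) (at t) \<and>
                  (\<eta>2 has_real_derivative (\<alpha> * k1 t * \<eta>1 t)) (at t))"
  define good where "good = (\<lambda>z. ?F differentiable (at z) \<and>
        dzbar ?F z = mu_of \<mu>0 z * dz ?F z + nu_of \<nu>0 z * cnj (dz ?F z))"
  have strip: "Q t" if t: "-pi < t" "t < pi" and g: "good (exp (Complex s t))" for t s
    unfolding Q_def
  proof
    assume bnd: "\<bar>\<mu>0 t\<bar> + \<bar>\<nu>0 t\<bar> \<le> c"
    have dif: "?F differentiable (at (exp (Complex s t)))" and eq: "dzbar ?F (exp (Complex s t)) =
        mu_of \<mu>0 (exp (Complex s t)) * dz ?F (exp (Complex s t)) + nu_of \<nu>0 (exp (Complex s t)) * cnj (dz ?F (exp (Complex s t)))"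
      using g unfolding good_def by auto
    have e0: "exp (\<alpha> * s) \<noteq> 0" by simp
    have eqF1: "\<eta>1 t' = Re (?F (exp (Complex s t'))) / exp (\<alpha> * s)" if "-pi < t'" "t' < pi" for t'
      using exp_strip_eq[OF that, of \<alpha> \<eta>1 \<eta>2 s] e0 by simp
    have eqF2: "\<eta>2 t' = Im (?F (exp (Complex s t'))) / exp (\<alpha> * s)" if "-pi < t'" "t' < pi" for t'
      using exp_strip_eq[OF that, of \<alpha> \<eta>1 \<eta>2 s] e0 by simp
    obtain d1 where d1: "(\<eta>1 has_real_derivative d1) (at t)"
      using diff_component[OF dif t eqF1 bounded_linear_Re] by blast
    obtain d2 where d2: "(\<eta>2 has_real_derivative d2) (at t)"
      using diff_component[OF dif t eqF2 bounded_linear_Im] by blast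
    have iff: "(dzbar ?F (exp (Complex s t)) =
        mu_of \<mu>0 (exp (Complex s t)) * dz ?F (exp (Complex s t)) + nu_of \<nu>0 (exp (Complex s t)) * cnj (dz ?F (exp (Complex s t))))
      \<longleftrightarrow> (\<alpha> * \<eta>1 t - d2 = - (\<mu>0 t + \<nu>0 t) * (\<alpha> * \<eta>1 t + d2) \<and>
            \<alpha> * \<eta>2 t + d1 = (\<nu>0 t - \<mu>0 t) * (\<alpha> * \<eta>2 t - d1))"
      using point_eq(2)[of "Complex s t" \<eta>1 d1 \<eta>2 d2 \<alpha> \<mu>0 \<nu>0] t d1 d2 by simp
    then have A: "\<alpha> * \<eta>1 t - d2 = - (\<mu>0 t + \<nu>0 t) * (\<alpha> * \<eta>1 t + d2)"
       and B: "\<alpha> * \<eta>2 t + d1 = (\<nu>0 t - \<mu>0 t) * (\<alpha> * \<eta>2 t - d1)" using eq by auto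
    note fa = fwd_alg[OF bnd c1 A B]
    show "k1 t > 0 \<and> k2 t > 0 \<and>
                  (\<eta>1 has_real_derivative (- \<alpha> / k2 t * \<eta>2 t)) (at t) \<and>
                  (\<eta>2 has_real_derivative (\<alpha> * k1 t * \<eta>1 t)) (at t)"
      using fa d1 d2 unfolding k1_def k2_def by simp
  qed
  have negZ: "negligible {z. \<not> good z}"
    using bel unfolding beltrami_ae_def good_def AE_lborel_iff_negligible .
  have "negligible {t. -pi < t \<and> t < pi \<and> (\<forall>s. exp (Complex s t) \<in> {z. \<not> good z})}"
    by (rule negligible_ray_set[OF negZ])
  moreover have "{t. -pi < t \<and> t < pi \<and> \<not> Q t} \<subseteq> {t. -pi < t \<and> t < pi \<and> (\<forall>s. exp (Complex s t) \<in> {z. \<not> good z})}"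
    using strip by blast
  ultimately have negB: "negligible {t. -pi < t \<and> t < pi \<and> \<not> Q t}" by (rule negligible_subset)
  have perQ: "Q (t + 2*pi) = Q t" for t
  proof -
    have a: "\<mu>0 (t + 2*pi) = \<mu>0 t" "\<nu>0 (t + 2*pi) = \<nu>0 t" "\<eta>1 (t + 2*pi) = \<eta>1 t" "\<eta>2 (t + 2*pi) = \<eta>2 t"
      using pm pn p1 p2 unfolding periodic2pi_def by auto
    show ?thesis unfolding Q_def k1_def k2_def a deriv_periodic[OF p1] deriv_periodic[OF p2] ..
  qed
  have aeQ: "AE t in lborel. Q t" by (rule AE_from_strip[OF perQ negB])
  show "let k1 = (\<lambda>t. (1 + \<mu>0 t + \<nu>0 t) / (1 - \<mu>0 t - \<nu>0 t));
                 k2 = (\<lambda>t. (1 - \<mu>0 t + \<nu>0 t) / (1 + \<mu>0 t - \<nu>0 t))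
             in AE t in lborel. k1 t > 0 \<and> k2 t > 0 \<and>
                  (\<eta>1 has_real_derivative (- \<alpha> / k2 t * \<eta>2 t)) (at t) \<and>
                  (\<eta>2 has_real_derivative (\<alpha> * k1 t * \<eta>1 t)) (at t)"
    unfolding Let_def using aeQ cae
    by eventually_elim (simp add: Q_def k1_def k2_def)
next
  let ?F = "polar_map \<alpha> \<eta>1 \<eta>2"
  fix k1 k2 :: "real \<Rightarrow> real"
  assume H: "periodic2pi k1 \<and> periodic2pi k2 \<and>
            (\<exists>m M. 0 < m \<and> (\<forall>t. m \<le> k1 t \<and> k1 t \<le> M \<and> m \<le> k2 t \<and> k2 t \<le> M)) \<and>
            (AE t in lborel. (\<eta>1 has_real_derivative (- \<alpha> / k2 t * \<eta>2 t)) (at t) \<and>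
                             (\<eta>2 has_real_derivative (\<alpha> * k1 t * \<eta>1 t)) (at t))"
  then obtain m M where mM: "0 < m" "\<And>t. m \<le> k1 t \<and> k1 t \<le> M \<and> m \<le> k2 t \<and> k2 t \<le> M" by blast
  have kp: "k1 t > 0" "k2 t > 0" for t using mM(1) mM(2)[of t] by linarith+
  define N where "N = {t. \<not> ((\<eta>1 has_real_derivative (- \<alpha> / k2 t * \<eta>2 t)) (at t) \<and>
                             (\<eta>2 has_real_derivative (\<alpha> * k1 t * \<eta>1 t)) (at t))}"
  have negN: "negligible N" using H unfolding N_def AE_lborel_iff_negligible by blast
  let ?mu = "mu_of (\<lambda>t. (k1 t - k2 t) / (1 + k1 t + k2 t + k1 t * k2 t))"
  let ?nu = "nu_of (\<lambda>t. (k1 t * k2 t - 1) / (1 + k1 t + k2 t + k1 t * k2 t))"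
  have sub: "{z. \<not> (?F differentiable (at z) \<and> dzbar ?F z = ?mu z * dz ?F z + ?nu z * cnj (dz ?F z))}
      \<subseteq> {z. \<i> \<bullet> z = 0} \<union> {z. z \<noteq> 0 \<and> Arg z \<in> N}"
  proof (rule subsetI, rule ccontr)
    fix z assume z1: "z \<in> {z. \<not> (?F differentiable (at z) \<and> dzbar ?F z = ?mu z * dz ?F z + ?nu z * cnj (dz ?F z))}"
      and z2: "z \<notin> {z. \<i> \<bullet> z = 0} \<union> {z. z \<noteq> 0 \<and> Arg z \<in> N}"
    have imz: "Im z \<noteq> 0" using z2 by simp
    then have z0: "z \<noteq> 0" by auto
    have zs: "z \<notin> \<real>\<^sub>\<le>\<^sub>0" using imz by (auto simp: complex_nonpos_Reals_iff)
    have argN: "Arg z \<notin> N" using z2 z0 by simp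
    define w where "w = Ln z"
    have ew: "exp w = z" unfolding w_def using z0 by simp
    have imw: "Im w = Arg z" unfolding w_def using z0 by (simp add: Arg_eq_Im_Ln)
    have wb: "-pi < Im w" "Im w < pi" unfolding w_def using mpi_less_Im_Ln[of z] Im_Ln_less_pi[OF zs] z0 by auto
    let ?t = "Im w"
    have d1: "(\<eta>1 has_real_derivative (- \<alpha> / k2 ?t * \<eta>2 ?t)) (at ?t)"
     and d2: "(\<eta>2 has_real_derivative (\<alpha> * k1 ?t * \<eta>1 ?t)) (at ?t)"
      using argN unfolding N_def imw by auto
    note pe = point_eq(1)[OF wb d1 d2, of \<alpha>] point_eq(2)[OF wb d1 d2, of \<alpha> "(\<lambda>t. (k1 t - k2 t) / (1 + k1 t + k2 t + k1 t * k2 t))"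
                        "(\<lambda>t. (k1 t * k2 t - 1) / (1 + k1 t + k2 t + k1 t * k2 t))"]
    note ca = conv_alg(1)[OF kp(1)[of ?t] kp(2)[of ?t], of \<alpha> "\<eta>1 ?t"] conv_alg(2)[OF kp(1)[of ?t] kp(2)[of ?t], of \<alpha> "\<eta>2 ?t"]
    have "?F differentiable (at z) \<and> dzbar ?F z = ?mu z * dz ?F z + ?nu z * cnj (dz ?F z)"
      using pe ca unfolding ew by (simp add: mult.assoc)
    then show False using z1 by simp
  qed
  have "negligible ({z. \<i> \<bullet> z = 0} \<union> {z. z \<noteq> 0 \<and> Arg z \<in> N})"
    using negligible_hyperplane[of \<i> 0] negligible_Arg_preimage[OF negN] by simp
  then have "negligible {z. \<not> (?F differentiable (at z) \<and> dzbar ?F z = ?mu z * dz ?F z + ?nu z * cnj (dz ?F z))}"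
    using sub by (rule negligible_subset)
  then show "beltrami_ae ?F ?mu ?nu"
    unfolding beltrami_ae_def AE_lborel_iff_negligible .
qed


end
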